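(* For every integer $n \geq 3$, the number $c_3(n)$ of cyclic permutations of length $n$ in the $\sigma$-class with signature $\sigma_3 = +-+$ satisfies \[ c_3(n) = \frac{L_3^*(n;\sigma_3)}{4}. \]
   Context: $\mathcal S_n$ is the set of permutations of $[n]=\{1,\dots,n\}$, written in one-line notation $\pi=\pi_1\cdots\pi_n$. A permutation is cyclic if its cycle decomposition consists of a single $n$-cycle; $\mathcal C_n$ is the set of cyclic permutations in $\mathcal S_n$. For a signature $\sigma=\sigma^0\sigma^1\cdots\sigma^{k-1}\in\{+,-\}^k$, the $\sigma$-class $\mathcal S^\sigma_n$ is the set of $\pi\in\mathcal S_n$ for which there exist integers $0=e_0\le e_1\le\cdots\le e_k=n$ such that for each $i\in\{0,\dots,k-1\}$ the segment $\pi_{e_i+1}\pi_{e_i+2}\cdots\pi_{e_{i+1}}$ is increasing if $\sigma^i=+$ and decreasing if $\sigma^i=-$. Set $\mathcal C_n^\sigma=\mathcal C_n\cap\mathcal S_n^\sigma$ and $c_3(n)=|\mathcal C_n^{+-+}|$. A word of length $m$ on $k$ letters is a sequence $s=s_1\cdots s_m$ with $s_j\in\{0,1,\dots,k-1\}$; it is primitive if it is not of the form $q^r$ (concatenation of $r$ copies of a word $q$) for any $r>1$. A necklace is an equivalence class of words under cyclic rotation; it is primitive if its representatives are primitive. $L_k(m)$ denotes the number of primitive necklaces of length $m$ on $k$ letters. For $\sigma\in\{+,-\}^k$ let $T_\sigma^-=\{i:\sigma^i=-\}$ and for a word $s$ let $o_\sigma(s)=|\{j: s_j\in T_\sigma^-\}|$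 (this is invariant under rotation). $L_k(m;\sigma)$ denotes the number of primitive necklaces of length $m$ on $k$ letters whose representatives $s$ have $o_\sigma(s)$ odd, with the convention $L_k(m;\sigma)=0$ if $m$ is not an integer. Finally $L_k^*(n;\sigma)=L_k(n)+L_k(\tfrac n2;\sigma)$ (so $L_k^*(n;\sigma)=L_k(n)$ when $n$ is odd). *)

theory Defs
  imports Complex_Main "HOL-Combinatorics.Permutations"
begin

text \<open>Permutations of [n] = {1..n} are functions nat => nat that permute {1..n};
  pi j is the j-th entry of the one-line notation.\<close>

definition cyclic_perm :: "nat \<Rightarrow> (nat \<Rightarrow> nat) \<Rightarrow> bool" where
  "cyclic_perm n \<pi> \<longleftrightarrow> \<pi> permutes {1..n} \<and>
     (\<forall>x\<in>{1..n}. \<forall>y\<in>{1..n}. \<exists>k. (\<pi> ^^ k) x = y)"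

text \<open>Signatures: lists of bool, True = +, False = -.\<close>

definition in_sigma_class :: "bool list \<Rightarrow> nat \<Rightarrow> (nat \<Rightarrow> nat) \<Rightarrow> bool" where
  "in_sigma_class \<sigma> n \<pi> \<longleftrightarrow> \<pi> permutes {1..n} \<and>
     (\<exists>e::nat \<Rightarrow> nat. e 0 = 0 \<and> e (length \<sigma>) = n \<and>
        (\<forall>i<length \<sigma>. e i \<le> e (Suc i)) \<and>
        (\<forall>i<length \<sigma>. \<forall>j. e i < j \<and> j < e (Suc i) \<longrightarrow>
            (if \<sigma> ! i then \<pi> j < \<pi> (Suc j) else \<pi> (Suc j) < \<pi> j)))"

definition cyc_class_count :: "bool list \<Rightarrow> nat \<Rightarrow> nat" where
  "cyc_class_count \<sigma> n = card {\<pi>. cyclic_perm n \<pi> \<and> in_sigma_class \<sigma> n \<pi>}"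

definition c3 :: "nat \<Rightarrow> nat" where
  "c3 n = cyc_class_count [True, False, True] n"

definition words :: "nat \<Rightarrow> nat \<Rightarrow> nat list set" where
  "words k m = {w. length w = m \<and> set w \<subseteq> {0..<k}}"

definition primitive_word :: "'a list \<Rightarrow> bool" where
  "primitive_word w \<longleftrightarrow> \<not> (\<exists>q r. r > 1 \<and> w = concat (replicate r q))"

definition necklace :: "'a list \<Rightarrow> 'a list set" where
  "necklace w = {rotate i w | i. True}"

definition primitive_necklaces :: "nat \<Rightarrow> nat \<Rightarrow> nat list set set" where
  "primitive_necklaces k m = necklace ` {w \<in> words k m. primitive_word w}"

definition L :: "nat \<Rightarrow> nat \<Rightarrow> nat" where
  "L k m = card (primitive_necklaces k m)"

definition T_minus :: "bool list \<Rightarrow> nat set" where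
  "T_minus \<sigma> = {i. i < length \<sigma> \<and> \<not> \<sigma> ! i}"

definition o_sigma :: "bool list \<Rightarrow> nat list \<Rightarrow> nat" where
  "o_sigma \<sigma> s = card {j. j < length s \<and> s ! j \<in> T_minus \<sigma>}"

text \<open>L_k(m;sigma) for integer m; the non-integer case is handled in L_star.\<close>
definition L_sig :: "nat \<Rightarrow> nat \<Rightarrow> bool list \<Rightarrow> nat" where
  "L_sig k m \<sigma> = card {N \<in> primitive_necklaces k m. \<forall>s\<in>N. odd (o_sigma \<sigma> s)}"

definition L_star :: "nat \<Rightarrow> nat \<Rightarrow> bool list \<Rightarrow> nat" where
  "L_star k n \<sigma> = L k n + (if even n then L_sig k (n div 2) \<sigma> else 0)"

end

theory Submission
  imports Defs
begin


lemma strict_mono_self_id: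
  fixes f :: "nat \<Rightarrow> nat"
  assumes fin: "finite S" and maps: "f ` S \<subseteq> S"
    and mono: "\<And>x y. x \<in> S \<Longrightarrow> y \<in> S \<Longrightarrow> x < y \<Longrightarrow> f x < f y"
    and x: "x \<in> S"
  shows "f x = x"
proof -
  have inj: "inj_on f S"
    by (rule inj_onI) (metis mono linorder_neqE_nat less_irrefl)
  have img: "f ` S = S" using card_image[OF inj] card_subset_eq[OF fin maps] by simp
  have eq: "f ` {y\<in>S. y < x} = {z\<in>S. z < f x}"
  proof
    show "f ` {y\<in>S. y < x} \<subseteq> {z\<in>S. z < f x}" using maps mono x by auto
    show "{z\<in>S. z < f x} \<subseteq> f ` {y\<in>S. y < x}"
    proof
      fix z assume z: "z \<in> {z\<in>S. z < f x}"
      then obtain y where y: "y\<in>S" "z = f y" using img by auto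
      have "y < x" using mono[OF x y(1)] z y by (metis mem_Collect_eq not_less_iff_gr_or_eq less_asym)
      then show "z \<in> f ` {y\<in>S. y < x}" using y by auto
    qed
  qed
  have c: "card {y\<in>S. y < x} = card {z\<in>S. z < f x}"
    using eq card_image inj_on_subset[OF inj] by (metis (no_types, lifting) mem_Collect_eq subsetI)
  show ?thesis
  proof (rule ccontr)
    assume "f x \<noteq> x"
    then consider "x < f x" | "f x < x" by linarith
    then show False
    proof cases
      case 1
      have "{y\<in>S. y < x} \<subset> {z\<in>S. z < f x}" using 1 x by auto
      then have "card {y\<in>S. y < x} < card {z\<in>S. z < f x}" using fin by (intro psubset_card_mono) auto
      with c show False by simp
    next
      case 2
      have fx: "f x \<in> S" using maps x by auto
      have "{z\<in>S. z < f x} \<subset> {y\<in>S. y < x}" using 2 fx by auto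
      then have "card {z\<in>S. z < f x} < card {y\<in>S. y < x}" using fin by (intro psubset_card_mono) auto
      with c show False by simp
    qed
  qed
qed

lemma funpow_in:
  assumes "p permutes S" "x \<in> S" shows "(p ^^ k) x \<in> S"
  using assms by (induction k) (auto simp: permutes_in_image)

lemma funpow_add_apply: "(f ^^ (m + n)) x = (f ^^ m) ((f ^^ n) x)"
  by (simp add: funpow_add)

lemma funpow_period:
  assumes "(f ^^ n) x = x" shows "(f ^^ m) x = (f ^^ (m mod n)) x"
proof -
  have "\<And>q. (f ^^ (q * n)) x = x"
  proof -
    fix q show "(f ^^ (q * n)) x = x"
    proof (induction q)
      case (Suc q)
      have "(f ^^ (Suc q * n)) x = (f ^^ n) ((f ^^ (q * n)) x)" by (metis funpow_add_apply mult_Suc)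
      then show ?case using Suc assms by simp
    qed simp
  qed
  then have "(f ^^ (m mod n + (m div n) * n)) x = (f ^^ (m mod n)) x"
    by (simp only: funpow_add_apply)
  moreover have "m mod n + (m div n) * n = m" by simp
  ultimately show ?thesis by simp
qed

lemma cyc_orbit:
  assumes cyc: "cyclic_perm n p" and x: "x \<in> {1..n}"
  shows "(p ^^ n) x = x" "inj_on (\<lambda>k. (p ^^ k) x) {0..<n}"
        "(\<lambda>k. (p ^^ k) x) ` {0..<n} = {1..n}"
proof -
  have perm: "p permutes {1..n}" and reach: "\<And>y. y \<in> {1..n} \<Longrightarrow> \<exists>k. (p ^^ k) x = y"
    using cyc x unfolding cyclic_perm_def by auto
  have px: "p x \<in> {1..n}" using perm x by (metis permutes_in_image)
  obtain k0 where "(p ^^ k0) (p x) = x" using cyc x px unfolding cyclic_perm_def by blast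
  then have ex: "(p ^^ Suc k0) x = x" by (metis funpow_Suc_right comp_apply)
  define P where "P = (LEAST q. 0 < q \<and> (p ^^ q) x = x)"
  have P: "0 < P" "(p ^^ P) x = x" using LeastI[of "\<lambda>q. 0 < q \<and> (p ^^ q) x = x" "Suc k0"] ex
    unfolding P_def by auto
  have Pmin: "\<And>q. 0 < q \<Longrightarrow> q < P \<Longrightarrow> (p ^^ q) x \<noteq> x"
    using not_less_Least P_def by blast
  have injP: "inj_on (\<lambda>k. (p ^^ k) x) {0..<P}"
  proof (rule inj_onI, rule ccontr)
    fix i j assume i: "i \<in> {0..<P}" and j: "j \<in> {0..<P}" and e: "(p ^^ i) x = (p ^^ j) x" and ne: "i \<noteq> j"
    { fix i j assume i: "i < P" and j: "j < P" and e: "(p ^^ i) x = (p ^^ j) x" and lt: "i < j"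
      have "(p ^^ (P - j + i)) x = (p ^^ (P - j)) ((p ^^ i) x)" by (simp add: funpow_add_apply)
      also have "\<dots> = (p ^^ (P - j)) ((p ^^ j) x)" using e by simp
      also have "\<dots> = (p ^^ (P - j + j)) x" by (simp only: funpow_add_apply)
      also have "\<dots> = (p ^^ P) x" using j by simp
      finally have "(p ^^ (P - j + i)) x = x" using P by simp
      moreover have "0 < P - j + i" "P - j + i < P" using lt j by auto
      ultimately have False using Pmin[of "P - j + i"] by simp }
    note * = this
    show False using ne i j e *[of i j] *[of j i] by (cases "i < j") auto
  qed
  have imgP: "(\<lambda>k. (p ^^ k) x) ` {0..<P} = {1..n}"
  proof
    show "(\<lambda>k. (p ^^ k) x) ` {0..<P} \<subseteq> {1..n}" using funpow_in[OF perm x] by auto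
    show "{1..n} \<subseteq> (\<lambda>k. (p ^^ k) x) ` {0..<P}"
    proof
      fix y assume "y \<in> {1..n}"
      then obtain k where "(p ^^ k) x = y" using reach by blast
      then have "(p ^^ (k mod P)) x = y" using funpow_period[OF P(2)] by simp
      moreover have "k mod P \<in> {0..<P}" using P by simp
      ultimately show "y \<in> (\<lambda>k. (p ^^ k) x) ` {0..<P}" by blast
    qed
  qed
  have "P = n" using card_image[OF injP] imgP by simp
  then show "(p ^^ n) x = x" "inj_on (\<lambda>k. (p ^^ k) x) {0..<n}"
        "(\<lambda>k. (p ^^ k) x) ` {0..<n} = {1..n}" using P injP imgP by auto
qed



definition letter :: "nat \<Rightarrow> nat \<Rightarrow> nat \<Rightarrow> nat" where
  "letter a b y = (if y \<le> a then 0 else if y \<le> b then 1 else 2)"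

definition valid :: "nat \<Rightarrow> (nat \<Rightarrow> nat) \<Rightarrow> nat \<Rightarrow> nat \<Rightarrow> bool" where
  "valid n p a b \<longleftrightarrow> a \<le> b \<and> b \<le> n \<and>
     (\<forall>j. 0 < j \<and> j < a \<longrightarrow> p j < p (Suc j)) \<and>
     (\<forall>j. a < j \<and> j < b \<longrightarrow> p (Suc j) < p j) \<and>
     (\<forall>j. b < j \<and> j < n \<longrightarrow> p j < p (Suc j))"

lemma class_iff:
  "in_sigma_class [True, False, True] n p \<longleftrightarrow> p permutes {1..n} \<and> (\<exists>a b. valid n p a b)"
proof
  assume h: "in_sigma_class [True, False, True] n p"
  then obtain e where e0: "e 0 = 0" "e (length [True, False, True]) = n" "\<forall>i<length [True, False, True]. e i \<le> e (Suc i)"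
    "\<forall>i<length [True, False, True]. \<forall>j. e i < j \<and> j < e (Suc i) \<longrightarrow>
            (if [True, False, True] ! i then p j < p (Suc j) else p (Suc j) < p j)"
    unfolding in_sigma_class_def by blast
  have l3: "length [True, False, True] = 3" by simp
  note e = e0[unfolded l3]
  have "valid n p (e 1) (e 2)"
    unfolding valid_def using e(3)[rule_format, of 0] e(3)[rule_format, of 1] e(3)[rule_format, of 2]
      e(4)[rule_format, of 0] e(4)[rule_format, of 1] e(4)[rule_format, of 2] e(1,2)
    by (auto simp: numeral_3_eq_3 numeral_2_eq_2)
  then show "p permutes {1..n} \<and> (\<exists>a b. valid n p a b)" using h unfolding in_sigma_class_def by auto
next
  assume "p permutes {1..n} \<and> (\<exists>a b. valid n p a b)"
  then obtain a b where p: "p permutes {1..n}" and v: "valid n p a b" by auto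
  define e where "e = (\<lambda>i::nat. if i = 0 then 0 else if i = 1 then a else if i = 2 then b else n)"
  have "\<forall>i<3. e i \<le> e (Suc i)" using v unfolding valid_def e_def
    by (auto simp: less_Suc_eq numeral_3_eq_3)
  moreover have "\<forall>i<3. \<forall>j. e i < j \<and> j < e (Suc i) \<longrightarrow>
            (if [True, False, True] ! i then p j < p (Suc j) else p (Suc j) < p j)"
    using v unfolding valid_def e_def by (auto simp: less_Suc_eq numeral_3_eq_3)
  moreover have "e 0 = 0" "e 3 = n" by (simp_all add: e_def)
  moreover have l3: "length [True, False, True] = 3" by simp
  ultimately show "in_sigma_class [True, False, True] n p"
    unfolding in_sigma_class_def l3 using p by blast
qed

lemma inc_seg:
  assumes "\<And>j. lo < j \<Longrightarrow> j < hi \<Longrightarrow> f j < f (Suc j)" "lo < x" "x < y" "y \<le> hi"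
  shows "(f::nat\<Rightarrow>nat) x < f y"
  using assms(3,4)
proof (induction y)
  case (Suc y)
  show ?case
  proof (cases "x = y")
    case True then show ?thesis using assms(1,2) Suc by auto
  next
    case False then have "f x < f y" using Suc by auto
    also have "f y < f (Suc y)" using assms(1,2) Suc False by auto
    finally show ?thesis .
  qed
qed simp

lemma dec_seg:
  assumes "\<And>j. lo < j \<Longrightarrow> j < hi \<Longrightarrow> f (Suc j) < f j" "lo < x" "x < y" "y \<le> hi"
  shows "(f::nat\<Rightarrow>nat) y < f x"
  using assms(3,4)
proof (induction y)
  case (Suc y)
  show ?case
  proof (cases "x = y")
    case True then show ?thesis using assms(1,2) Suc by auto
  next
    case False then have "f y < f x" using Suc by auto
    moreover have "f (Suc y) < f y" using assms(1,2) Suc False by auto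
    ultimately show ?thesis by simp
  qed
qed simp

lemma letter_mono: "x \<le> y \<Longrightarrow> letter a b x \<le> letter a b y"
  by (auto simp: letter_def)

lemma seg_order:
  assumes v: "valid n p a b" and x: "x \<in> {1..n}" and y: "y \<in> {1..n}" and xy: "x < y"
    and l: "letter a b x = letter a b y"
  shows "if letter a b x = 1 then p y < p x else p x < p y"
proof -
  have ab: "a \<le> b" "b \<le> n" using v by (auto simp: valid_def)
  consider "y \<le> a" | "a < x" "y \<le> b" | "b < x"
    using l xy unfolding letter_def by (auto split: if_splits)
  then show ?thesis
  proof cases
    case 1
    then have "p x < p y" using inc_seg[of 0 a p x y] v x xy unfolding valid_def by auto
    then show ?thesis using 1 xy by (auto simp: letter_def)
  next
    case 2
    then have "p y < p x" using dec_seg[of a b p x y] v xy unfolding valid_def by auto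
    then show ?thesis using 2 xy by (auto simp: letter_def)
  next
    case 3
    then have "p x < p y" using inc_seg[of b n p x y] v y xy unfolding valid_def by auto
    then show ?thesis using 3 xy ab by (auto simp: letter_def)
  qed
qed



lemma cyc_perm: "cyclic_perm n p \<Longrightarrow> p permutes {1..n}"
  by (simp add: cyclic_perm_def)

lemma four_segs:
  assumes cyc: "cyclic_perm n p" and n2: "2 \<le> n" and ex: "valid n p a0 b0"
  shows "card {(a, b). valid n p a b} = 4"
proof -
  have perm: "p permutes {1..n}" using cyc by (simp add: cyclic_perm_def)
  have inj: "inj p" using perm permutes_inj by blast
  define D where "D = {j. 1 \<le> j \<and> j < n \<and> p (Suc j) < p j}"
  have nd: "\<And>j. 1 \<le> j \<Longrightarrow> j < n \<Longrightarrow> j \<notin> D \<Longrightarrow> p j < p (Suc j)"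
  proof -
    fix j assume "1 \<le> j" "j < n" "j \<notin> D"
    moreover have "p j \<noteq> p (Suc j)" using inj by (metis injD n_not_Suc_n)
    ultimately show "p j < p (Suc j)" unfolding D_def by auto
  qed
  have finD: "finite D" unfolding D_def by auto
  have neD: "D \<noteq> {}"
  proof
    assume De: "D = {}"
    have "\<And>x. x \<in> {1..n} \<Longrightarrow> p x = x"
    proof (rule strict_mono_self_id[of "{1..n}" p])
      show "p ` {1..n} \<subseteq> {1..n}" using perm by (simp add: permutes_image)
      fix x y assume "x \<in> {1..n}" "y \<in> {1..n}" "x < y"
      then show "p x < p y" using inc_seg[of 0 n p x y] nd De by auto
    qed auto
    then have "\<And>k. (p ^^ k) 1 = 1" using n2 by (induct_tac k) auto
    moreover obtain k where "(p ^^ k) 1 = 2" using cyc n2 unfolding cyclic_perm_def by force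
    ultimately show False by simp
  qed
  define P where "P = Min D"
  define Q where "Q = Max D"
  have PD: "P \<in> D" and QD: "Q \<in> D" using finD neD unfolding P_def Q_def by auto
  have Pmin: "\<And>j. j \<in> D \<Longrightarrow> P \<le> j" and Qmax: "\<And>j. j \<in> D \<Longrightarrow> j \<le> Q"
    using finD unfolding P_def Q_def by auto
  have PQ: "1 \<le> P" "P \<le> Q" "Q < n" using PD QD Pmin unfolding D_def by auto
  have v: "\<And>a b. valid n p a b \<longleftrightarrow> a \<le> b \<and> b \<le> n \<and> (\<forall>j. 0 < j \<and> j < a \<longrightarrow> j \<notin> D)
      \<and> (\<forall>j. a < j \<and> j < b \<longrightarrow> j \<in> D) \<and> (\<forall>j. b < j \<and> j < n \<longrightarrow> j \<notin> D)"
  proof -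
    fix a b
    show "valid n p a b \<longleftrightarrow> a \<le> b \<and> b \<le> n \<and> (\<forall>j. 0 < j \<and> j < a \<longrightarrow> j \<notin> D)
      \<and> (\<forall>j. a < j \<and> j < b \<longrightarrow> j \<in> D) \<and> (\<forall>j. b < j \<and> j < n \<longrightarrow> j \<notin> D)"
      unfolding valid_def using nd by (auto simp: D_def)
  qed
  have interval: "\<And>j. j \<in> D \<longleftrightarrow> P \<le> j \<and> j \<le> Q"
  proof -
    have a0: "\<And>j. j \<in> D \<Longrightarrow> a0 \<le> j \<and> j \<le> b0" using ex unfolding v D_def
      by (metis (no_types, lifting) D_def leI less_le_trans mem_Collect_eq not_one_le_zero zero_less_iff_neq_zero)
    fix j
    show "j \<in> D \<longleftrightarrow> P \<le> j \<and> j \<le> Q"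
    proof
      assume "j \<in> D" then show "P \<le> j \<and> j \<le> Q" using Pmin Qmax by auto
    next
      assume j: "P \<le> j \<and> j \<le> Q"
      show "j \<in> D"
      proof (cases "j = P \<or> j = Q")
        case True then show ?thesis using PD QD by auto
      next
        case False
        then have "a0 < j" "j < b0" using j a0[OF PD] a0[OF QD] by auto
        then show ?thesis using ex unfolding v by auto
      qed
    qed
  qed
  have eqset: "{(a, b). valid n p a b} = {P - 1, P} \<times> {Q, Suc Q}"
  proof -
    have "valid n p a b \<longleftrightarrow> (a, b) \<in> {P - 1, P} \<times> {Q, Suc Q}" for a b
    proof
      assume va: "valid n p a b"
      have "a \<le> P" using va PQ PD unfolding v by (metis leI less_le_trans zero_less_one)
      moreover have "Q \<le> b" using va PQ QD unfolding v by (metis leI)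
      moreover have "P - 1 \<le> a"
      proof (rule ccontr)
        assume "\<not> P - 1 \<le> a"
        then have "a < P - 1" "P - 1 < b" using \<open>Q \<le> b\<close> PQ by auto
        then have "P - 1 \<in> D" using va unfolding v by auto
        then show False using Pmin PQ by fastforce
      qed
      moreover have "b \<le> Suc Q"
      proof (rule ccontr)
        assume "\<not> b \<le> Suc Q"
        then have "a < Suc Q" "Suc Q < b" using \<open>a \<le> P\<close> PQ by auto
        then have "Suc Q \<in> D" using va unfolding v by auto
        then show False using Qmax by fastforce
      qed
      ultimately show "(a, b) \<in> {P - 1, P} \<times> {Q, Suc Q}" by auto
    next
      assume ab: "(a, b) \<in> {P - 1, P} \<times> {Q, Suc Q}"
      then show "valid n p a b" unfolding v interval using PQ by auto
    qed
    then show ?thesis by auto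
  qed
  show ?thesis unfolding eqset using PQ by (simp add: card_cartesian_product)
qed



function lts :: "nat list \<Rightarrow> nat list \<Rightarrow> bool" where
  "lts (c#s) (d#t) = (if c = d then (if c = 1 then lts t s else lts s t) else c < d)"
| "lts [] _ = False"
| "lts (c#s) [] = False"
  by pat_completeness auto
termination by (relation "measure (\<lambda>(s,t). length s + length t)") auto

lemma lts_irrefl: "\<not> lts s s"
  by (induction s) auto

lemma lts_trans: "length s = length t \<Longrightarrow> length t = length u \<Longrightarrow> lts s t \<Longrightarrow> lts t u \<Longrightarrow> lts s u"
proof (induction "length s" arbitrary: s t u)
  case 0 then show ?case by simp
next
  case (Suc k)
  obtain c s' where s: "s = c # s'" using Suc.hyps(2) by (cases s) auto
  obtain d t' where t: "t = d # t'" using Suc.prems(1) s by (cases t) auto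
  obtain e u' where u: "u = e # u'" using Suc.prems(2) t by (cases u) auto
  have l: "length s' = k" "length t' = k" "length u' = k" using Suc s t u by auto
  show ?case using Suc.prems(3,4) Suc.hyps(1)[of s' t' u'] Suc.hyps(1)[of u' t' s'] l
    unfolding s t u by (auto split: if_splits)
qed

lemma lts_asym: "length s = length t \<Longrightarrow> lts s t \<Longrightarrow> \<not> lts t s"
  using lts_trans lts_irrefl by metis

lemma lts_total: "length s = length t \<Longrightarrow> s \<noteq> t \<Longrightarrow> lts s t \<or> lts t s"
proof (induction s arbitrary: t)
  case Nil then show ?case by simp
next
  case (Cons c s)
  then obtain d t' where t: "t = d # t'" by (cases t) auto
  show ?case using Cons.IH[of t'] Cons.prems unfolding t by auto
qed

lemma lts_append2: "length s = length t \<Longrightarrow> s \<noteq> t \<Longrightarrow>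
   lts (s @ u) (t @ v) = lts s t \<and> lts (t @ v) (s @ u) = lts t s"
proof (induction s arbitrary: t u v)
  case Nil then show ?case by simp
next
  case (Cons c s)
  then obtain d t' where t: "t = d # t'" by (cases t) auto
  have l: "length s = length t'" using Cons.prems t by simp
  show ?case
  proof (cases "c = d")
    case True
    then have "s \<noteq> t'" using Cons.prems t by simp
    then show ?thesis using Cons.IH[OF l, of u v] t True by simp
  next
    case False then show ?thesis using t by simp
  qed
qed

lemma lts_append: "length s = length t \<Longrightarrow> s \<noteq> t \<Longrightarrow> lts (s @ u) (t @ v) = lts s t"
  using lts_append2 by blast

lemma lts_hd: "lts (c # s) (d # t) \<Longrightarrow> c \<le> d"
  by (auto split: if_splits)

fun itin :: "(nat \<Rightarrow> nat) \<Rightarrow> nat \<Rightarrow> nat \<Rightarrow> nat \<Rightarrow> nat \<Rightarrow> nat list" where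
  "itin p a b 0 x = []"
| "itin p a b (Suc k) x = letter a b x # itin p a b k (p x)"

lemma itin_length[simp]: "length (itin p a b k x) = k"
  by (induction k arbitrary: x) auto

lemma itin_nth: "j < k \<Longrightarrow> itin p a b k x ! j = letter a b ((p ^^ j) x)"
proof (induction k arbitrary: x j)
  case 0 then show ?case by simp
next
  case (Suc k)
  show ?case
  proof (cases j)
    case 0 then show ?thesis by simp
  next
    case (Suc j')
    have "(p ^^ Suc j') x = (p ^^ j') (p x)" by (metis funpow_Suc_right comp_apply)
    then show ?thesis using Suc.IH[of j' "p x"] Suc.prems \<open>j = Suc j'\<close> by simp
  qed
qed

lemma itin_take: "j \<le> k \<Longrightarrow> itin p a b j x = take j (itin p a b k x)"
  by (rule nth_equalityI) (auto simp: itin_nth)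

definition ones :: "nat list \<Rightarrow> nat" where
  "ones s = length (filter (\<lambda>c. c = 1) s)"

lemma ones_simps[simp]: "ones [] = 0" "ones (c # s) = (if c = 1 then Suc (ones s) else ones s)"
  "ones (s @ t) = ones s + ones t"
  by (auto simp: ones_def)

lemma perm_in: "p permutes S \<Longrightarrow> x \<in> S \<Longrightarrow> p x \<in> S"
  by (metis permutes_in_image)

lemma itin_order:
  assumes v: "valid n p a b" and perm: "p permutes {1..n}"
  shows "x \<in> {1..n} \<Longrightarrow> y \<in> {1..n} \<Longrightarrow> x < y \<Longrightarrow>
         itin p a b k x = itin p a b k y \<or> lts (itin p a b k x) (itin p a b k y)"
proof (induction k arbitrary: x y)
  case 0 then show ?case by simp
next
  case (Suc k)
  have px: "p x \<in> {1..n}" "p y \<in> {1..n}" using Suc.prems perm_in[OF perm] by auto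
  have le: "letter a b x \<le> letter a b y" using Suc.prems letter_mono by auto
  show ?case
  proof (cases "letter a b x = letter a b y")
    case False then show ?thesis using le by simp
  next
    case True
    note so = seg_order[OF v Suc.prems True]
    show ?thesis
    proof (cases "letter a b x = 1")
      case True
      then have "p y < p x" using so by simp
      then show ?thesis using Suc.IH[OF px(2) px(1)] True \<open>letter a b x = letter a b y\<close> by auto
    next
      case False
      then have "p x < p y" using so by simp
      then show ?thesis using Suc.IH[OF px(1) px(2)] False \<open>letter a b x = letter a b y\<close> by auto
    qed
  qed
qed

lemma itin_parity:
  assumes v: "valid n p a b" and perm: "p permutes {1..n}"
  shows "x \<in> {1..n} \<Longrightarrow> y \<in> {1..n} \<Longrightarrow> x \<noteq> y \<Longrightarrow> itin p a b k x = itin p a b k y \<Longrightarrow>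
         ((p ^^ k) x < (p ^^ k) y \<longleftrightarrow> ((x < y) \<longleftrightarrow> even (ones (itin p a b k x))))"
proof (induction k arbitrary: x y)
  case 0 then show ?case by auto
next
  case (Suc k)
  have px: "p x \<in> {1..n}" "p y \<in> {1..n}" using Suc.prems perm_in[OF perm] by auto
  have pne: "p x \<noteq> p y" using Suc.prems(3) perm by (metis permutes_inj injD)
  have l: "letter a b x = letter a b y" using Suc.prems(4) by simp
  have rest: "itin p a b k (p x) = itin p a b k (p y)" using Suc.prems(4) by simp
  have pxy: "p x < p y \<longleftrightarrow> ((x < y) \<longleftrightarrow> letter a b x \<noteq> 1)"
  proof (cases "x < y")
    case True then show ?thesis using seg_order[OF v Suc.prems(1,2) True l] by auto
  next
    case False then have "y < x" using Suc.prems(3) by simp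
    then show ?thesis using seg_order[OF v Suc.prems(2,1) \<open>y < x\<close> l[symmetric]] l
      by (auto split: if_splits)
  qed
  have IH: "(p ^^ k) (p x) < (p ^^ k) (p y) \<longleftrightarrow> ((p x < p y) \<longleftrightarrow> even (ones (itin p a b k (p x))))"
    using Suc.IH[OF px pne rest] .
  have fs: "\<And>z. (p ^^ Suc k) z = (p ^^ k) (p z)" by (metis funpow_Suc_right comp_apply)
  show ?case using IH pxy l unfolding fs by auto
qed



lemma funpow_comm_apply: "(p ^^ i) ((p ^^ j) x) = (p ^^ (i + j)) x"
  by (simp add: funpow_add_apply)

lemma itin_rotate:
  assumes cyc: "cyclic_perm n p" and x: "x \<in> {1..n}"
  shows "itin p a b n ((p ^^ i) x) = rotate i (itin p a b n x)"
proof (rule nth_equalityI)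
  show "length (itin p a b n ((p ^^ i) x)) = length (rotate i (itin p a b n x))" by simp
  fix j assume "j < length (itin p a b n ((p ^^ i) x))"
  then have j: "j < n" by simp
  have np: "(p ^^ n) x = x" using cyc_orbit(1)[OF cyc x] .
  have "itin p a b n ((p ^^ i) x) ! j = letter a b ((p ^^ (j + i)) x)"
    using j by (simp add: itin_nth funpow_comm_apply)
  also have "\<dots> = letter a b ((p ^^ ((i + j) mod n)) x)"
    using funpow_period[OF np, of "j + i"] by (simp add: add.commute)
  also have "\<dots> = rotate i (itin p a b n x) ! j"
    using j x by (simp add: nth_rotate itin_nth)
  finally show "itin p a b n ((p ^^ i) x) ! j = rotate i (itin p a b n x) ! j" .
qed

lemma orbit_card:
  assumes cyc: "cyclic_perm n p" and x: "x \<in> {1..n}"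
  shows "card {k. k < n \<and> P ((p ^^ k) x)} = card {z \<in> {1..n}. P z}"
proof -
  let ?f = "\<lambda>k. (p ^^ k) x"
  have inj: "inj_on ?f {k. k < n \<and> P ((p ^^ k) x)}"
    using cyc_orbit(2)[OF cyc x] by (rule inj_on_subset) auto
  have "{z \<in> {1..n}. P z} = {z \<in> ?f ` {0..<n}. P z}" using cyc_orbit(3)[OF cyc x] by simp
  also have "\<dots> = ?f ` {k. k < n \<and> P ((p ^^ k) x)}" by auto
  finally have "?f ` {k. k < n \<and> P ((p ^^ k) x)} = {z \<in> {1..n}. P z}" by simp
  then show ?thesis using card_image[OF inj] by simp
qed

lemma count_letters:
  assumes cyc: "cyclic_perm n p" and v: "valid n p a b" and x: "x \<in> {1..n}"
  shows "card {k. k < n \<and> itin p a b n x ! k = 0} = a"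
        "card {k. k < n \<and> itin p a b n x ! k \<le> 1} = b"
proof -
  have ab: "a \<le> b" "b \<le> n" using v by (auto simp: valid_def)
  have "{k. k < n \<and> itin p a b n x ! k = 0} = {k. k < n \<and> ((p ^^ k) x) \<le> a}"
    by (auto simp: itin_nth letter_def split: if_splits)
  moreover have "{z \<in> {1..n}. z \<le> a} = {1..a}" using ab by auto
  ultimately show "card {k. k < n \<and> itin p a b n x ! k = 0} = a"
    using orbit_card[OF cyc x, of "\<lambda>z. z \<le> a"] by simp
  have "{k. k < n \<and> itin p a b n x ! k \<le> 1} = {k. k < n \<and> ((p ^^ k) x) \<le> b}"
    using ab by (auto simp: itin_nth letter_def split: if_splits)
  moreover have "{z \<in> {1..n}. z \<le> b} = {1..b}" using ab by auto
  ultimately show "card {k. k < n \<and> itin p a b n x ! k \<le> 1} = b"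
    using orbit_card[OF cyc x, of "\<lambda>z. z \<le> b"] by simp
qed

lemma struct_rot:
  assumes cyc: "cyclic_perm n p" and v: "valid n p a b" and x: "x \<in> {1..n}"
    and rot: "rotate d (itin p a b n x) = itin p a b n x" and d: "0 < d" "d < n"
  shows "n = 2 * d \<and> odd (ones (take d (itin p a b n x)))"
proof -
  let ?w = "itin p a b n x"
  have perm: "p permutes {1..n}" using cyc by (simp add: cyclic_perm_def)
  define S where "S = {z \<in> {1..n}. itin p a b n z = ?w}"
  define g where "g = p ^^ d"
  have finS: "finite S" unfolding S_def by auto
  have inj_g: "inj g" unfolding g_def using permutes_inj[OF perm] by (rule inj_fn)
  have xS: "x \<in> S" using x unfolding S_def by auto
  have gS: "g ` S \<subseteq> S"
  proof
    fix y assume "y \<in> g ` S"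
    then obtain z where z: "z \<in> S" "y = g z" by auto
    have "itin p a b n (g z) = rotate d (itin p a b n z)"
      unfolding g_def using itin_rotate[OF cyc] z unfolding S_def by auto
    also have "\<dots> = ?w" using z rot unfolding S_def by auto
    finally show "y \<in> S" using z funpow_in[OF perm] unfolding S_def g_def by auto
  qed
  have gord: "\<And>z1 z2. z1 \<in> S \<Longrightarrow> z2 \<in> S \<Longrightarrow> z1 < z2 \<Longrightarrow>
      (g z1 < g z2 \<longleftrightarrow> even (ones (take d ?w)))"
  proof -
    fix z1 z2 assume z: "z1 \<in> S" "z2 \<in> S" "z1 < z2"
    have t: "itin p a b d z1 = take d ?w" "itin p a b d z2 = take d ?w"
      using z d itin_take[of d n p a b] unfolding S_def by auto
    show "g z1 < g z2 \<longleftrightarrow> even (ones (take d ?w))"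
      using itin_parity[OF v perm, of z1 z2 d] z t unfolding S_def g_def by auto
  qed
  have gx: "g x \<noteq> x"
  proof
    assume "g x = x"
    then have "(p ^^ d) x = (p ^^ 0) x" unfolding g_def by simp
    then show False using inj_onD[OF cyc_orbit(2)[OF cyc x], of d 0] d by auto
  qed
  have odd: "odd (ones (take d ?w))"
  proof (rule ccontr)
    assume "\<not> odd (ones (take d ?w))"
    then have "g x = x" using strict_mono_self_id[OF finS gS _ xS] gord by auto
    then show False using gx by simp
  qed
  have hS: "(g \<circ> g) ` S \<subseteq> S" using gS by auto
  have "(g \<circ> g) x = x"
  proof (rule strict_mono_self_id[OF finS hS _ xS])
    fix z1 z2 assume z: "z1 \<in> S" "z2 \<in> S" "z1 < z2"
    have "g z1 \<noteq> g z2" using z inj_g by (metis injD less_irrefl)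
    then have "g z2 < g z1" using gord[OF z] odd by auto
    moreover have "g z1 \<in> S" "g z2 \<in> S" using gS z by auto
    moreover have "g (g z1) \<noteq> g (g z2)" using inj_g z by (metis injD less_irrefl)
    ultimately show "(g \<circ> g) z1 < (g \<circ> g) z2" using gord[of "g z2" "g z1"] odd by auto
  qed
  then have "(p ^^ (d + d)) x = x" unfolding g_def by (simp add: funpow_comm_apply)
  moreover have np: "(p ^^ n) x = x" using cyc_orbit(1)[OF cyc x] .
  ultimately have "(p ^^ ((d + d) mod n)) x = (p ^^ 0) x" using funpow_period[OF np, of "d + d"] by simp
  then have "(d + d) mod n = 0" using inj_onD[OF cyc_orbit(2)[OF cyc x]] d by auto
  then obtain k where k: "d + d = n * k" by (metis mod_eq_0_iff_dvd dvd_def)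
  have "k < 2" using k d by (metis add_less_mono mult_2_right nat_mult_less_cancel_disj)
  moreover have "k \<noteq> 0"
  proof
    assume "k = 0" then have "d + d = 0" using k by simp
    then show False using d by simp
  qed
  ultimately have "k = 1" by auto
  then have "n = 2 * d" using k by simp
  then show ?thesis using odd by simp
qed



lemma length_concat_rep[simp]: "length (concat (replicate r q)) = r * length q"
  by (induction r) auto

lemma concat_rep_add: "concat (replicate (r + s) q) = concat (replicate r q) @ concat (replicate s q)"
  by (simp add: replicate_add)

lemma rot_concat_rep:
  assumes "0 < r" shows "rotate (length q) (concat (replicate r q)) = concat (replicate r q)"
proof -
  obtain r' where r: "r = Suc r'" using assms by (cases r) auto
  have "concat (replicate r q) = q @ concat (replicate r' q)" using r by simp
  moreover have "concat (replicate r' q) @ q = q @ concat (replicate r' q)"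
    by (induction r') auto
  ultimately show ?thesis by (simp add: rotate_append)
qed

lemma nth_concat_rep: "i < r * length q \<Longrightarrow> concat (replicate r q) ! i = q ! (i mod length q)"
proof (induction r arbitrary: i)
  case 0 then show ?case by simp
next
  case (Suc r)
  show ?case
  proof (cases "i < length q")
    case True then show ?thesis by (simp add: nth_append)
  next
    case False
    then have "concat (replicate r q) ! (i - length q) = q ! ((i - length q) mod length q)"
      using Suc by (intro Suc.IH) auto
    then show ?thesis using False by (simp add: nth_append le_mod_geq)
  qed
qed

lemma rotate_double: "rotate i (q @ q) = rotate i q @ rotate i q"
proof (induction i)
  case 0 then show ?case by simp
next
  case (Suc i)
  show ?case
  proof (cases q)
    case Nil then show ?thesis by simp
  next
    case (Cons c q')
    then obtain e r where r: "rotate i q = e # r" by (cases "rotate i q") auto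
    have "rotate (Suc i) (q @ q) = rotate1 (rotate i q @ rotate i q)" using Suc by simp
    also have "\<dots> = (r @ [e]) @ (r @ [e])" unfolding r by simp
    also have "\<dots> = rotate (Suc i) q @ rotate (Suc i) q" using r by simp
    finally show ?thesis .
  qed
qed

lemma ones_rotate[simp]: "ones (rotate i s) = ones s"
proof -
  let ?k = "i mod length s"
  have "ones (rotate i s) = ones (drop ?k s) + ones (take ?k s)" by (simp add: rotate_drop_take)
  moreover have "ones s = ones (take ?k s) + ones (drop ?k s)" by (metis append_take_drop_id ones_simps(3))
  ultimately show ?thesis by linarith
qed

lemma necklace_self: "w \<in> necklace w"
  unfolding necklace_def by (auto intro: exI[of _ 0])

lemma necklace_rotate: "necklace (rotate k w) = necklace w"
proof (cases "w = []")
  case True then show ?thesis by simp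
next
  case False
  let ?n = "length w"
  have "rotate i w = rotate (i + ?n * k - k) (rotate k w)" for i
  proof -
    have "1 \<le> ?n" using False by (simp add: Suc_le_eq)
    then have "1 * k \<le> ?n * k" by (rule mult_le_mono1)
    then have "i + ?n * k - k + k = i + ?n * k" by linarith
    then have "rotate (i + ?n * k - k) (rotate k w) = rotate (i + ?n * k) w" by (simp add: rotate_rotate)
    also have "\<dots> = rotate i w" by (metis rotate_conv_mod mod_mult_self2)
    finally show ?thesis by simp
  qed
  then show ?thesis unfolding necklace_def by (auto simp: rotate_rotate)
qed

lemma necklace_mem: "v \<in> necklace w \<Longrightarrow> necklace v = necklace w"
proof -
  assume "v \<in> necklace w"
  then obtain i where "v = rotate i w" unfolding necklace_def by auto
  then show ?thesis by (simp add: necklace_rotate)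
qed

lemma prim_rot:
  assumes rot: "rotate d w = w" and d: "0 < d" "d < length w"
  shows "\<not> primitive_word w"
proof -
  let ?n = "length w"
  define g where "g = gcd d ?n"
  have g: "0 < g" "g dvd ?n" "g \<le> d" using d unfolding g_def by (auto intro: dvd_imp_le)
  have step: "\<And>i. i < ?n \<Longrightarrow> w ! ((i + d) mod ?n) = w ! i"
    using rot nth_rotate by (metis add.commute)
  have stepk: "\<And>i. i < ?n \<Longrightarrow> w ! ((i + k * d) mod ?n) = w ! i" for k
  proof (induction k)
    case 0 then show ?case by simp
  next
    case (Suc k)
    have "(i + Suc k * d) mod ?n = ((i + k * d) mod ?n + d) mod ?n" by (metis mod_add_left_eq add.assoc add.commute mult_Suc)
    moreover have "(i + k * d) mod ?n < ?n" by (rule mod_less_divisor) (use assms(3) in auto)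
    ultimately have "w ! ((i + Suc k * d) mod ?n) = w ! ((i + k * d) mod ?n)"
      using step[of "(i + k * d) mod ?n"] by simp
    then show ?case using Suc by simp
  qed
  obtain x y where xy: "d * x = ?n * y + g" using bezout_nat[of d ?n] d unfolding g_def by auto
  have gstep: "\<And>i. i < ?n \<Longrightarrow> w ! ((i + g) mod ?n) = w ! i"
  proof -
    fix i assume i: "i < ?n"
    have "(i + x * d) mod ?n = (i + g + ?n * y) mod ?n" using xy by (simp add: mult.commute add_ac)
    also have "\<dots> = (i + g) mod ?n" by simp
    finally show "w ! ((i + g) mod ?n) = w ! i" using stepk[OF i, of x] by simp
  qed
  have modg: "\<And>i. i < ?n \<Longrightarrow> w ! i = w ! (i mod g)"
  proof -
    fix i show "i < ?n \<Longrightarrow> w ! i = w ! (i mod g)"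
    proof (induction i rule: less_induct)
      case (less i)
      show ?case
      proof (cases "i < g")
        case True then show ?thesis by simp
      next
        case False
        then have "w ! ((i - g + g) mod ?n) = w ! (i - g)" using gstep[of "i - g"] less.prems by simp
        then have "w ! i = w ! (i - g)" using False less.prems by simp
        also have "\<dots> = w ! ((i - g) mod g)" using less.IH[of "i - g"] less.prems g False by simp
        also have "\<dots> = w ! (i mod g)" using False by (simp add: le_mod_geq)
        finally show ?thesis .
      qed
    qed
  qed
  have len: "(?n div g) * length (take g w) = ?n" using g d by simp
  have weq: "w = concat (replicate (?n div g) (take g w))"
  proof (rule nth_equalityI)
    show "length w = length (concat (replicate (?n div g) (take g w)))" using len by simp
    fix i assume i: "i < length w"
    have "concat (replicate (?n div g) (take g w)) ! i = take g w ! (i mod g)"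
      using nth_concat_rep[of i "?n div g" "take g w"] len i g d by simp
    also have "\<dots> = w ! (i mod g)" using g by simp
    finally show "w ! i = concat (replicate (?n div g) (take g w)) ! i" using modg[OF i] by simp
  qed
  have "1 < ?n div g"
  proof (rule ccontr)
    assume "\<not> 1 < ?n div g"
    then have "?n div g \<le> 1" by simp
    then have "?n \<le> g" using len g d by (metis dvd_mult_div_cancel mult.commute mult_le_mono1 nat_mult_1)
    then show False using g d by simp
  qed
  then show ?thesis using weq unfolding primitive_word_def by blast
qed

lemma struct_nonprim:
  assumes cyc: "cyclic_perm n p" and v: "valid n p a b" and x: "x \<in> {1..n}"
    and np: "\<not> primitive_word (itin p a b n x)"
  shows "\<exists>q. itin p a b n x = q @ q \<and> primitive_word q \<and> odd (ones q) \<and> 2 * length q = n"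
proof -
  let ?w = "itin p a b n x"
  obtain q r where qr: "1 < r" "?w = concat (replicate r q)" using np unfolding primitive_word_def by auto
  have n: "n = r * length q" using qr by (metis itin_length length_concat_rep)
  have n0: "0 < n" using x by auto
  have d: "0 < length q" "length q < n" using n n0 qr(1) by auto
  have "rotate (length q) ?w = ?w" using qr rot_concat_rep[of r q] by simp
  from struct_rot[OF cyc v x this d] have s: "n = 2 * length q" "odd (ones (take (length q) ?w))" by auto
  have r2: "r = 2" using n s d by simp
  then have wq: "?w = q @ q" using qr by (simp add: numeral_2_eq_2)
  have oq: "odd (ones q)" using s wq by simp
  have pq: "primitive_word q"
  proof (rule ccontr)
    assume "\<not> primitive_word q"
    then obtain q' s' where qs: "1 < s'" "q = concat (replicate s' q')" unfolding primitive_word_def by auto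
    have wc: "?w = concat (replicate (s' + s') q')" using wq qs by (simp add: concat_rep_add)
    have lq: "length q = s' * length q'" using qs by simp
    have rq: "rotate (length q') ?w = ?w" using rot_concat_rep[of "s' + s'" q'] qs wc by simp
    have lq': "length q' \<le> s' * length q'" using qs by simp
    have "s' * length q' < n" using lq d by simp
    moreover have "0 < length q'" using lq d qs by auto
    ultimately have q'b: "0 < length q'" "length q' < n" using lq' by linarith+
    have "n = 2 * length q'" using struct_rot[OF cyc v x rq q'b] by blast
    then show False using lq s qs d by auto
  qed
  show ?thesis using wq pq oq s by blast
qed



lemma rotate_cancel:
  assumes "i < length w" shows "rotate (length w - i) (rotate i w) = w"
  using assms by (simp add: rotate_rotate)

lemma inj_core:
  assumes cyc: "cyclic_perm n p" and v: "valid n p a b"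
    and cyc': "cyclic_perm n p'" and v': "valid n p' a' b'"
    and x: "x \<in> {1..n}" and x': "x' \<in> {1..n}"
    and w: "itin p a b n x = itin p' a' b' n x'"
    and align: "\<And>d. 0 < d \<Longrightarrow> d < n \<Longrightarrow> rotate d (itin p a b n x) = itin p a b n x \<Longrightarrow>
                 (x < (p ^^ d) x \<longleftrightarrow> x' < (p' ^^ d) x')"
  shows "p = p' \<and> a = a' \<and> b = b'"
proof -
  let ?w = "itin p a b n x"
  have perm: "p permutes {1..n}" and perm': "p' permutes {1..n}" using cyc cyc' by (simp_all add: cyclic_perm_def)
  have n0: "0 < n" using x by auto
  have ab: "a = a'" "b = b'"
    using count_letters[OF cyc v x] count_letters[OF cyc' v' x'] w by metis+
  have rot: "\<And>i. itin p a b n ((p ^^ i) x) = rotate i ?w" using itin_rotate[OF cyc x] .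
  have rot': "\<And>i. itin p' a' b' n ((p' ^^ i) x') = rotate i ?w" using itin_rotate[OF cyc' x'] w by simp
  have inO: "\<And>k. (p ^^ k) x \<in> {1..n}" using funpow_in[OF perm x] .
  have inO': "\<And>k. (p' ^^ k) x' \<in> {1..n}" using funpow_in[OF perm' x'] .
  have injO: "inj_on (\<lambda>k. (p ^^ k) x) {0..<n}" using cyc_orbit(2)[OF cyc x] .
  have injO': "inj_on (\<lambda>k. (p' ^^ k) x') {0..<n}" using cyc_orbit(2)[OF cyc' x'] .
  have np: "(p ^^ n) x = x" using cyc_orbit(1)[OF cyc x] .
  have np': "(p' ^^ n) x' = x'" using cyc_orbit(1)[OF cyc' x'] .
  have lw: "length ?w = n" by simp
  have transfer: "\<And>j k. j < n \<Longrightarrow> k < n \<Longrightarrow> (p ^^ j) x < (p ^^ k) x \<Longrightarrow> (p' ^^ j) x' < (p' ^^ k) x'"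
  proof -
    fix j k assume j: "j < n" and k: "k < n" and lt: "(p ^^ j) x < (p ^^ k) x"
    have jk: "j \<noteq> k" using lt by auto
    have ne': "(p' ^^ j) x' \<noteq> (p' ^^ k) x'" using inj_onD[OF injO', of j k] j k jk by auto
    from itin_order[OF v perm inO inO lt, where k=n] rot
    have "rotate j ?w = rotate k ?w \<or> lts (rotate j ?w) (rotate k ?w)" by simp
    then show "(p' ^^ j) x' < (p' ^^ k) x'"
    proof
      assume l: "lts (rotate j ?w) (rotate k ?w)"
      show ?thesis
      proof (rule ccontr)
        assume "\<not> (p' ^^ j) x' < (p' ^^ k) x'"
        then have "(p' ^^ k) x' < (p' ^^ j) x'" using ne' by simp
        from itin_order[OF v' perm' inO' inO' this, where k=n] rot'
        have "rotate k ?w = rotate j ?w \<or> lts (rotate k ?w) (rotate j ?w)" by simp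
        then show False using l lts_irrefl lts_asym[of "rotate j ?w" "rotate k ?w"] by auto
      qed
    next
      assume eq: "rotate j ?w = rotate k ?w"
      define d where "d = (k + n - j) mod n"
      have d: "0 < d" "d < n" using j k jk n0 unfolding d_def
        by (auto simp: mod_if split: if_splits)
      have dj: "(d + j) mod n = k" using j k unfolding d_def by (simp add: mod_add_left_eq)
      have "rotate d (rotate j ?w) = rotate (d + j) ?w" by (simp add: rotate_rotate)
      also have "\<dots> = rotate k ?w" using dj lw by (metis rotate_conv_mod)
      finally have "rotate d (rotate j ?w) = rotate j ?w" using eq by simp
      then have "rotate (n - j) (rotate d (rotate j ?w)) = rotate (n - j) (rotate j ?w)" by simp
      then have rd: "rotate d ?w = ?w" using rotate_cancel[of j ?w] j lw
        by (metis rotate_rotate add.commute)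
      have xd: "(p ^^ d) x \<noteq> x" using inj_onD[OF injO, of d 0] d by auto
      have xd': "(p' ^^ d) x' \<noteq> x'" using inj_onD[OF injO', of d 0] d by auto
      have tj: "itin p a b j ((p ^^ d) x) = itin p a b j x"
        using itin_take[of j n p a b] rot[of d] rd j by simp
      have tj': "itin p' a' b' j ((p' ^^ d) x') = itin p' a' b' j x'"
        using itin_take[of j n p' a' b'] rot'[of d] rd j w by simp
      have tjj: "itin p' a' b' j x' = itin p a b j x"
        using itin_take[of j n p' a' b' x'] itin_take[of j n p a b x] j w by simp
      have par: "(p ^^ j) x < (p ^^ j) ((p ^^ d) x) \<longleftrightarrow> ((x < (p ^^ d) x) \<longleftrightarrow> even (ones (itin p a b j x)))"
        using itin_parity[OF v perm x inO xd[symmetric] tj[symmetric]] .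
      have par': "(p' ^^ j) x' < (p' ^^ j) ((p' ^^ d) x') \<longleftrightarrow> ((x' < (p' ^^ d) x') \<longleftrightarrow> even (ones (itin p a b j x)))"
        using itin_parity[OF v' perm' x' inO' xd'[symmetric] tj'[symmetric]] tjj by simp
      have e1: "(p ^^ j) ((p ^^ d) x) = (p ^^ k) x"
        using funpow_period[OF np, of "j + d"] dj by (simp add: funpow_comm_apply add.commute)
      have e2: "(p' ^^ j) ((p' ^^ d) x') = (p' ^^ k) x'"
        using funpow_period[OF np', of "j + d"] dj by (simp add: funpow_comm_apply add.commute)
      show ?thesis using par par' e1 e2 lt align[OF d rd] by simp
    qed
  qed
  define iv where "iv = inv_into {0..<n} (\<lambda>k. (p ^^ k) x)"
  have bij: "bij_betw (\<lambda>k. (p ^^ k) x) {0..<n} {1..n}"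
    using injO cyc_orbit(3)[OF cyc x] by (simp add: bij_betw_def)
  have iv1: "\<And>z. z \<in> {1..n} \<Longrightarrow> iv z < n \<and> (p ^^ iv z) x = z"
  proof -
    fix z assume "z \<in> {1..n}"
    then have z: "z \<in> (\<lambda>k. (p ^^ k) x) ` {0..<n}" using cyc_orbit(3)[OF cyc x] by simp
    show "iv z < n \<and> (p ^^ iv z) x = z"
      using inv_into_into[OF z] f_inv_into_f[OF z] unfolding iv_def by auto
  qed
  have iv2: "\<And>k. k < n \<Longrightarrow> iv ((p ^^ k) x) = k"
    using injO unfolding iv_def by (metis atLeastLessThan_iff inv_into_f_f zero_le)
  define phi where "phi = (\<lambda>z. (p' ^^ iv z) x')"
  have phi_id: "\<And>z. z \<in> {1..n} \<Longrightarrow> phi z = z"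
  proof (rule strict_mono_self_id[of "{1..n}" phi])
    show "phi ` {1..n} \<subseteq> {1..n}" unfolding phi_def using inO' by auto
    fix z1 z2 assume "z1 \<in> {1..n}" "z2 \<in> {1..n}" "z1 < z2"
    then show "phi z1 < phi z2" unfolding phi_def using transfer iv1 by metis
  qed auto
  have same: "\<And>k. k < n \<Longrightarrow> (p ^^ k) x = (p' ^^ k) x'"
    using phi_id inO iv2 unfolding phi_def by metis
  have same2: "\<And>k. k \<le> n \<Longrightarrow> (p ^^ k) x = (p' ^^ k) x'"
  proof -
    fix k assume "k \<le> n"
    then consider "k < n" | "k = n" by linarith
    then show "(p ^^ k) x = (p' ^^ k) x'"
    proof cases
      case 1 then show ?thesis using same by simp
    next
      case 2 then show ?thesis using np np' same[of 0] n0 by simp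
    qed
  qed
  have "p = p'"
  proof
    fix z
    show "p z = p' z"
    proof (cases "z \<in> {1..n}")
      case False then show ?thesis using perm perm' by (simp add: permutes_not_in)
    next
      case True
      then obtain k where k: "k < n" "z = (p ^^ k) x" using iv1 by metis
      have "(p ^^ Suc k) x = (p' ^^ Suc k) x'" using same2[of "Suc k"] k by simp
      then have "p ((p ^^ k) x) = p' ((p' ^^ k) x')" by simp
      moreover have "(p' ^^ k) x' = z" using same[of k] k by simp
      ultimately show ?thesis using k by simp
    qed
  qed
  then show ?thesis using ab by simp
qed



lemma card_insert_le:
  assumes "finite B" "insert i A \<subseteq> B" "i \<notin> A" shows "Suc (card A) \<le> card B"
proof -
  have "A \<subseteq> B" using assms(2) by (simp add: insert_subset)
  then have "finite A" using assms(1) by (rule finite_subset)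
  then have "card (insert i A) = Suc (card A)" using assms(3) by simp
  moreover have "card (insert i A) \<le> card B" using assms(1,2) by (rule card_mono)
  ultimately show ?thesis by simp
qed

lemma suc_mod_inj: "i < n \<Longrightarrow> j < n \<Longrightarrow> Suc i mod n = Suc j mod n \<Longrightarrow> i = j"
  by (cases "Suc i = n"; cases "Suc j = n") (auto simp: mod_if)

lemma construct:
  assumes n0: "0 < n" and lw: "length w = n" and sw: "set w \<subseteq> {0..<3}"
    and H1: "\<And>i j. i < n \<Longrightarrow> j < n \<Longrightarrow> i \<noteq> j \<Longrightarrow> rotate i w = rotate j w \<Longrightarrow>
               odd (ones (take i w)) \<noteq> odd (ones (take j w))"
    and H2: "\<And>i j. i < n \<Longrightarrow> j < n \<Longrightarrow> i \<noteq> j \<Longrightarrow> rotate i w = rotate j w \<Longrightarrow> even (ones w)"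
  shows "\<exists>p a b x. cyclic_perm n p \<and> valid n p a b \<and> x \<in> {1..n} \<and> itin p a b n x = w"
proof -
  define R where "R = (\<lambda>i. rotate i w)"
  define od where "od = (\<lambda>i. odd (ones (take i w)))"
  define prec where "prec = (\<lambda>i j. lts (R i) (R j) \<or> (R i = R j \<and> \<not> od i \<and> od j))"
  define rk where "rk = (\<lambda>i. Suc (card {j. j < n \<and> prec j i}))"
  define s where "s = (\<lambda>i. Suc i mod n)"
  have lR: "\<And>i. length (R i) = n" unfolding R_def using lw by simp
  have irr: "\<And>i. \<not> prec i i" unfolding prec_def using lts_irrefl by auto
  have trans: "\<And>i j k. prec i j \<Longrightarrow> prec j k \<Longrightarrow> prec i k"
    unfolding prec_def using lts_trans lR by metis
  have total: "\<And>i j. i < n \<Longrightarrow> j < n \<Longrightarrow> i \<noteq> j \<Longrightarrow> prec i j \<or> prec j i"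
  proof -
    fix i j assume ij: "i < n" "j < n" "i \<noteq> j"
    show "prec i j \<or> prec j i"
    proof (cases "R i = R j")
      case True then have "od i \<noteq> od j" using H1[OF ij] unfolding R_def od_def by simp
      then show ?thesis using True unfolding prec_def by auto
    next
      case False then show ?thesis using lts_total[OF lR[of i, folded lR[of j]]] unfolding prec_def by auto
    qed
  qed
  have rk_lt: "\<And>i j. i < n \<Longrightarrow> j < n \<Longrightarrow> prec i j \<Longrightarrow> rk i < rk j"
  proof -
    fix i j assume ij: "i < n" "j < n" "prec i j"
    have "insert i {l. l < n \<and> prec l i} \<subseteq> {l. l < n \<and> prec l j}" using ij trans by auto
    moreover have "i \<notin> {l. l < n \<and> prec l i}" using irr by auto
    ultimately have "Suc (card {l. l < n \<and> prec l i}) \<le> card {l. l < n \<and> prec l j}"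
      by (intro card_insert_le) auto
    then show "rk i < rk j" unfolding rk_def by simp
  qed
  have rk_in: "\<And>i. i < n \<Longrightarrow> rk i \<in> {1..n}"
  proof -
    fix i assume i: "i < n"
    have "{l. l < n \<and> prec l i} \<subseteq> {0..<n} - {i}" using irr by auto
    then have "card {l. l < n \<and> prec l i} \<le> card ({0..<n} - {i})" by (intro card_mono) auto
    also have "\<dots> = n - 1" using i by simp
    finally have "card {l. l < n \<and> prec l i} \<le> n - 1" .
    then show "rk i \<in> {1..n}" unfolding rk_def using i by auto
  qed
  have rk_inj: "inj_on rk {0..<n}"
  proof (rule inj_onI, rule ccontr)
    fix i j assume ij: "i \<in> {0..<n}" "j \<in> {0..<n}" "rk i = rk j" "i \<noteq> j"
    then show False using total[of i j] rk_lt[of i j] rk_lt[of j i] by auto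
  qed
  have rk_img: "rk ` {0..<n} = {1..n}"
  proof -
    have "rk ` {0..<n} \<subseteq> {1..n}" using rk_in by auto
    moreover have "card (rk ` {0..<n}) = card {1..n}" using card_image[OF rk_inj] by simp
    ultimately show ?thesis by (simp add: card_subset_eq)
  qed
  have rk_mono_iff: "\<And>i j. i < n \<Longrightarrow> j < n \<Longrightarrow> rk i < rk j \<Longrightarrow> prec i j"
  proof -
    fix i j assume ij: "i < n" "j < n" "rk i < rk j"
    then have "i \<noteq> j" by auto
    then show "prec i j" using total[of i j] rk_lt[of j i] ij by auto
  qed
  define ri where "ri = inv_into {0..<n} rk"
  have ri: "\<And>z. z \<in> {1..n} \<Longrightarrow> ri z < n \<and> rk (ri z) = z"
  proof -
    fix z assume "z \<in> {1..n}"
    then have z: "z \<in> rk ` {0..<n}" using rk_img by simp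
    show "ri z < n \<and> rk (ri z) = z" using inv_into_into[OF z] f_inv_into_f[OF z] unfolding ri_def by auto
  qed
  have ri2: "\<And>i. i < n \<Longrightarrow> ri (rk i) = i"
    using rk_inj unfolding ri_def by (metis atLeastLessThan_iff inv_into_f_f zero_le)
  have s_lt: "\<And>i. s i < n" unfolding s_def using n0 by simp
  define p where "p = (\<lambda>z. if z \<in> {1..n} then rk (s (ri z)) else z)"
  have p_rk: "\<And>i. i < n \<Longrightarrow> p (rk i) = rk (s i)"
    unfolding p_def using rk_in ri2 by auto
  have perm: "p permutes {1..n}"
  proof (rule bij_imp_permutes)
    have inj: "inj_on p {1..n}"
    proof (rule inj_onI)
      fix z1 z2 assume z: "z1 \<in> {1..n}" "z2 \<in> {1..n}" "p z1 = p z2"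
      then have "rk (s (ri z1)) = rk (s (ri z2))" unfolding p_def by simp
      then have "s (ri z1) = s (ri z2)" using inj_onD[OF rk_inj] s_lt by auto
      then have "ri z1 = ri z2" using ri[OF z(1)] ri[OF z(2)] unfolding s_def
        using suc_mod_inj by blast
      then show "z1 = z2" using ri[OF z(1)] ri[OF z(2)] by metis
    qed
    have sub: "p ` {1..n} \<subseteq> {1..n}" unfolding p_def using rk_in s_lt by auto
    have "p ` {1..n} = {1..n}" using card_image[OF inj] sub by (simp add: card_subset_eq)
    then show "bij_betw p {1..n} {1..n}" using inj by (simp add: bij_betw_def)
    show "\<And>x. x \<notin> {1..n} \<Longrightarrow> p x = x" unfolding p_def by auto
  qed
  have pk: "\<And>i k. i < n \<Longrightarrow> (p ^^ k) (rk i) = rk ((i + k) mod n)"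
  proof -
    fix i k assume i: "i < n"
    show "(p ^^ k) (rk i) = rk ((i + k) mod n)"
    proof (induction k)
      case 0 then show ?case using i by simp
    next
      case (Suc k)
      have "(p ^^ Suc k) (rk i) = p (rk ((i + k) mod n))" using Suc by simp
      also have "\<dots> = rk (s ((i + k) mod n))" using p_rk n0 by simp
      also have "s ((i + k) mod n) = (i + Suc k) mod n" unfolding s_def by (simp add: mod_Suc_eq)
      finally show ?case .
    qed
  qed
  have cyc: "cyclic_perm n p"
    unfolding cyclic_perm_def
  proof (intro conjI perm ballI)
    fix x y assume x: "x \<in> {1..n}" and y: "y \<in> {1..n}"
    obtain i where i: "i < n" "x = rk i" using ri[OF x] by metis
    obtain j where j: "j < n" "y = rk j" using ri[OF y] by metis
    have "(i + (n - i + j)) mod n = j" using i j by simp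
    then have "(p ^^ (n - i + j)) x = y" using pk[OF i(1)] i j by simp
    then show "\<exists>k. (p ^^ k) x = y" by blast
  qed
  define a where "a = card {i. i < n \<and> w ! i = 0}"
  define b where "b = card {i. i < n \<and> w ! i \<le> 1}"
  have ab1: "a \<le> b" unfolding a_def b_def by (intro card_mono) auto
  have "b \<le> card {0..<n}" unfolding b_def by (intro card_mono) auto
  then have ab: "a \<le> b" "b \<le> n" using ab1 by auto
  have hdR: "\<And>i. i < n \<Longrightarrow> R i = w ! i # tl (R i)"
  proof -
    fix i assume i: "i < n"
    have "R i \<noteq> []" using lR n0 by (metis list.size(3) less_irrefl)
    moreover have "R i ! 0 = w ! i" unfolding R_def using i lw n0 by (simp add: nth_rotate)
    ultimately show "R i = w ! i # tl (R i)" by (metis hd_conv_nth list.exhaust_sel)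
  qed
  have prec_le: "\<And>i j. i < n \<Longrightarrow> j < n \<Longrightarrow> prec j i \<Longrightarrow> w ! j \<le> w ! i"
  proof -
    fix i j assume ij: "i < n" "j < n" "prec j i"
    show "w ! j \<le> w ! i"
    proof (cases "R j = R i")
      case True then show ?thesis using hdR[OF ij(1)] hdR[OF ij(2)] by (metis list.inject order_refl)
    next
      case False
      then have "lts (R j) (R i)" using ij unfolding prec_def by auto
      then show ?thesis using hdR[OF ij(1)] hdR[OF ij(2)] lts_hd by metis
    qed
  qed
  have lt_prec: "\<And>i j. i < n \<Longrightarrow> j < n \<Longrightarrow> w ! j < w ! i \<Longrightarrow> prec j i"
  proof -
    fix i j assume ij: "i < n" "j < n" "w ! j < w ! i"
    have "lts (w ! j # tl (R j)) (w ! i # tl (R i))" using ij(3) by simp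
    then show "prec j i" unfolding prec_def using hdR[OF ij(1)] hdR[OF ij(2)] by metis
  qed
  have rk_bounds: "\<And>i. i < n \<Longrightarrow> card {j. j < n \<and> w ! j < w ! i} < rk i \<and>
                                   rk i \<le> card {j. j < n \<and> w ! j \<le> w ! i}"
  proof -
    fix i assume i: "i < n"
    have "{j. j < n \<and> w ! j < w ! i} \<subseteq> {j. j < n \<and> prec j i}" using lt_prec i by auto
    then have c1: "card {j. j < n \<and> w ! j < w ! i} \<le> card {j. j < n \<and> prec j i}" by (intro card_mono) auto
    have "insert i {j. j < n \<and> prec j i} \<subseteq> {j. j < n \<and> w ! j \<le> w ! i}" using prec_le i by auto
    moreover have "i \<notin> {j. j < n \<and> prec j i}" using irr by auto
    ultimately have c2: "Suc (card {j. j < n \<and> prec j i}) \<le> card {j. j < n \<and> w ! j \<le> w ! i}"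
      by (intro card_insert_le) auto
    show "card {j. j < n \<and> w ! j < w ! i} < rk i \<and> rk i \<le> card {j. j < n \<and> w ! j \<le> w ! i}"
      using c1 c2 unfolding rk_def by simp
  qed
  have w3: "\<And>i. i < n \<Longrightarrow> w ! i < 3" using sw lw by (metis atLeastLessThan_iff nth_mem subsetD)
  have letter_rk: "\<And>i. i < n \<Longrightarrow> letter a b (rk i) = w ! i"
  proof -
    fix i assume i: "i < n"
    note bd = rk_bounds[OF i]
    have "w ! i = 0 \<or> w ! i = 1 \<or> w ! i = 2" using w3[OF i] by auto
    then show "letter a b (rk i) = w ! i"
    proof (elim disjE)
      assume c: "w ! i = 0"
      then show ?thesis using bd unfolding letter_def a_def by simp
    next
      assume c: "w ! i = 1"
      have "{j. j < n \<and> w ! j < w ! i} = {j. j < n \<and> w ! j = 0}" using c by auto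
      then show ?thesis using bd c unfolding letter_def a_def b_def by simp
    next
      assume c: "w ! i = 2"
      have "{j. j < n \<and> w ! j < w ! i} = {j. j < n \<and> w ! j \<le> 1}" using c by auto
      then show ?thesis using bd c ab unfolding letter_def a_def b_def by simp
    qed
  qed
  have Rs: "\<And>i. i < n \<Longrightarrow> R (s i) = tl (R i) @ [w ! i]"
  proof -
    fix i assume i: "i < n"
    have "R (s i) = rotate (Suc i) w" unfolding R_def s_def using lw by (metis rotate_conv_mod)
    also have "\<dots> = rotate1 (R i)" unfolding R_def by simp
    also have "\<dots> = tl (R i) @ [w ! i]" using hdR[OF i] by (metis rotate1.simps(2))
    finally show "R (s i) = tl (R i) @ [w ! i]" .
  qed
  have os: "\<And>u v. u < n \<Longrightarrow> v < n \<Longrightarrow> u \<noteq> v \<Longrightarrow> R u = R v \<Longrightarrow>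
               od (s u) = (od u \<noteq> (w ! u = 1))"
  proof -
    fix u v assume uv: "u < n" "v < n" "u \<noteq> v" "R u = R v"
    have ev: "even (ones w)" using H2[OF uv(1,2,3)] uv(4) unfolding R_def by simp
    show "od (s u) = (od u \<noteq> (w ! u = 1))"
    proof (cases "Suc u < n")
      case True
      then have "take (Suc u) w = take u w @ [w ! u]" using lw by (simp add: take_Suc_conv_app_nth)
      then show ?thesis using True unfolding od_def s_def by auto
    next
      case False
      then have su: "Suc u = n" using uv by simp
      then have "take u w @ [w ! u] = w" using lw by (metis lessI take_Suc_conv_app_nth take_all order_refl)
      then have e: "ones w = ones (take u w) + ones [w ! u]" by (metis ones_simps(3))
      have e2: "ones [w ! u] = (if w ! u = 1 then 1 else 0)" by simp
      have "ones (take u w) + (if w ! u = 1 then 1 else 0) = ones w" using e e2 by linarith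
      then have "ones w = ones (take u w) + (if w ! u = 1 then 1 else 0)" by simp
      then have "od u = (w ! u = 1)" using ev unfolding od_def by (cases "w ! u = 1") auto
      moreover have "s u = 0" using su unfolding s_def by simp
      ultimately show ?thesis unfolding od_def by simp
    qed
  qed
  have shift: "\<And>u v. u < n \<Longrightarrow> v < n \<Longrightarrow> prec u v \<Longrightarrow> w ! u = w ! v \<Longrightarrow>
                 (if w ! u = 1 then prec (s v) (s u) else prec (s u) (s v))"
  proof -
    fix u v assume uv: "u < n" "v < n" "prec u v" "w ! u = w ! v"
    let ?c = "w ! u"
    show "if ?c = 1 then prec (s v) (s u) else prec (s u) (s v)"
    proof (cases "R u = R v")
      case False
      then have l: "lts (R u) (R v)" using uv unfolding prec_def by auto
      have ne: "tl (R u) \<noteq> tl (R v)" using False hdR[OF uv(1)] hdR[OF uv(2)] uv(4) by metis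
      have len: "length (tl (R u)) = length (tl (R v))" using lR by simp
      have l2: "lts (?c # tl (R u)) (?c # tl (R v))" using l hdR[OF uv(1)] hdR[OF uv(2)] uv(4) by metis
      have a1: "lts (tl (R u) @ [?c]) (tl (R v) @ [?c]) = lts (tl (R u)) (tl (R v))"
        using lts_append[OF len ne] .
      have a2: "lts (tl (R v) @ [?c]) (tl (R u) @ [?c]) = lts (tl (R v)) (tl (R u))"
        using lts_append[OF len[symmetric] ne[symmetric]] .
      show ?thesis using l2 a1 a2 Rs[OF uv(1)] Rs[OF uv(2)] uv(4) unfolding prec_def
        by (auto split: if_splits)
    next
      case True
      then have ne: "u \<noteq> v" and oo: "\<not> od u" "od v" using uv irr unfolding prec_def
        by (auto simp: lts_irrefl)
      have e: "R (s u) = R (s v)" using Rs[OF uv(1)] Rs[OF uv(2)] True uv(4) by simp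
      have o1: "od (s u) = (od u \<noteq> (?c = 1))" using os[OF uv(1,2) ne True] .
      have o2: "od (s v) = (od v \<noteq> (?c = 1))" using os[OF uv(2,1) ne[symmetric] True[symmetric]] uv(4) by simp
      show ?thesis using e o1 o2 oo unfolding prec_def by auto
    qed
  qed
  have seg: "\<And>y. y \<in> {1..n} \<Longrightarrow> Suc y \<in> {1..n} \<Longrightarrow> letter a b y = letter a b (Suc y) \<Longrightarrow>
              (if letter a b y = 1 then p (Suc y) < p y else p y < p (Suc y))"
  proof -
    fix y assume y: "y \<in> {1..n}" "Suc y \<in> {1..n}" "letter a b y = letter a b (Suc y)"
    obtain u where u: "u < n" "rk u = y" using ri[OF y(1)] by metis
    obtain v where v: "v < n" "rk v = Suc y" using ri[OF y(2)] by metis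
    have pr: "prec u v" using rk_mono_iff[OF u(1) v(1)] u v by simp
    have wuv: "w ! u = w ! v" using letter_rk[OF u(1)] letter_rk[OF v(1)] u v y(3) by simp
    have lu: "letter a b y = w ! u" using letter_rk[OF u(1)] u by simp
    note sh = shift[OF u(1) v(1) pr wuv]
    have pu: "p y = rk (s u)" "p (Suc y) = rk (s v)" using p_rk[OF u(1)] p_rk[OF v(1)] u(2) v(2) by auto
    show "if letter a b y = 1 then p (Suc y) < p y else p y < p (Suc y)"
      using sh rk_lt[OF s_lt s_lt] pu lu by (auto split: if_splits)
  qed
  have valid: "valid n p a b"
    unfolding valid_def
  proof (intro conjI allI impI)
    show "a \<le> b" "b \<le> n" using ab by auto
    fix j
    { assume j: "0 < j \<and> j < a"
      then have "letter a b j = 0" "letter a b (Suc j) = 0" "j \<in> {1..n}" "Suc j \<in> {1..n}"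
        using ab by (auto simp: letter_def)
      then show "p j < p (Suc j)" using seg by fastforce }
    { assume j: "a < j \<and> j < b"
      then have "letter a b j = 1" "letter a b (Suc j) = 1" "j \<in> {1..n}" "Suc j \<in> {1..n}"
        using ab by (auto simp: letter_def)
      then show "p (Suc j) < p j" using seg by fastforce }
    { assume j: "b < j \<and> j < n"
      then have "letter a b j = 2" "letter a b (Suc j) = 2" "j \<in> {1..n}" "Suc j \<in> {1..n}"
        using ab by (auto simp: letter_def)
      then show "p j < p (Suc j)" using seg by fastforce }
  qed
  have x0: "rk 0 \<in> {1..n}" using rk_in n0 by simp
  have "itin p a b n (rk 0) = w"
  proof (rule nth_equalityI)
    show "length (itin p a b n (rk 0)) = length w" using lw by simp
    fix k assume "k < length (itin p a b n (rk 0))"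
    then have k: "k < n" by simp
    have "itin p a b n (rk 0) ! k = letter a b ((p ^^ k) (rk 0))" using k by (simp add: itin_nth)
    also have "\<dots> = letter a b (rk k)" using pk[OF n0, of k] k by simp
    also have "\<dots> = w ! k" using letter_rk[OF k] .
    finally show "itin p a b n (rk 0) ! k = w ! k" .
  qed
  then show ?thesis using cyc valid x0 by blast
qed



lemma rot_eq_diff:
  assumes "i < j" "j < length w" "rotate i w = rotate j w"
  shows "rotate (j - i) w = w"
proof -
  have "rotate j w = rotate (j - i) (rotate i w)" using assms(1) by (simp add: rotate_rotate)
  then have "rotate (j - i) (rotate i w) = rotate i w" using assms(3) by simp
  then have e: "rotate (length w - i) (rotate (j - i) (rotate i w)) = rotate (length w - i) (rotate i w)" by simp
  have c: "rotate (length w - i) (rotate i w) = w" using rotate_cancel[of i w] assms by simp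
  have "rotate (length w - i) (rotate (j - i) (rotate i w)) = rotate (j - i) (rotate (length w - i) (rotate i w))"
    by (simp add: rotate_rotate add_ac)
  then show ?thesis using e c by simp
qed

lemma prim_rot_distinct:
  assumes "primitive_word w" "i < length w" "j < length w" "rotate i w = rotate j w"
  shows "i = j"
proof (rule ccontr)
  assume "i \<noteq> j"
  then consider "i < j" | "j < i" by linarith
  then show False
  proof cases
    case 1
    have "0 < j - i" "j - i < length w" using 1 assms by auto
    then show False using rot_eq_diff[OF 1 assms(3,4)] prim_rot assms(1) by blast
  next
    case 2
    have "0 < i - j" "i - j < length w" using 2 assms by auto
    then show False using rot_eq_diff[OF 2 assms(2) assms(4)[symmetric]] prim_rot assms(1) by blast
  qed
qed

lemma itin_letters: "set (itin p a b k x) \<subseteq> {0..<3}"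
  by (induction k arbitrary: x) (auto simp: letter_def)

lemma inj_pairs:
  assumes cyc: "cyclic_perm n p" and v: "valid n p a b"
    and cyc': "cyclic_perm n p'" and v': "valid n p' a' b'"
    and x: "x \<in> {1..n}" and x': "x' \<in> {1..n}"
    and w: "itin p a b n x = itin p' a' b' n x'"
  shows "p = p' \<and> a = a' \<and> b = b'"
proof (cases "\<exists>d. 0 < d \<and> d < n \<and> rotate d (itin p a b n x) = itin p a b n x")
  case False
  then show ?thesis using inj_core[OF cyc v cyc' v' x x' w] by blast
next
  case True
  then obtain d where d: "0 < d" "d < n" "rotate d (itin p a b n x) = itin p a b n x" by blast
  have n2: "n = 2 * d" using struct_rot[OF cyc v x d(3) d(1,2)] by simp
  have uniq: "d' = d" if "0 < d'" "d' < n" "rotate d' (itin p a b n x) = itin p a b n x" for d'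
  proof -
    have "n = 2 * d'" using struct_rot[OF cyc v x that(3) that(1,2)] by simp
    then show ?thesis using n2 by simp
  qed
  have perm': "p' permutes {1..n}" using cyc' by (simp add: cyclic_perm_def)
  show ?thesis
  proof (cases "x < (p ^^ d) x \<longleftrightarrow> x' < (p' ^^ d) x'")
    case True
    show ?thesis using inj_core[OF cyc v cyc' v' x x' w] True uniq by blast
  next
    case False
    define x1 where "x1 = (p' ^^ d) x'"
    have x1: "x1 \<in> {1..n}" unfolding x1_def using funpow_in[OF perm' x'] .
    have w1: "itin p a b n x = itin p' a' b' n x1"
      unfolding x1_def using itin_rotate[OF cyc' x'] w d by simp
    have "(p' ^^ d) x1 = (p' ^^ (d + d)) x'" unfolding x1_def by (simp add: funpow_comm_apply)
    also have "\<dots> = x'" using n2 cyc_orbit(1)[OF cyc' x'] by (simp add: mult_2)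
    finally have bk: "(p' ^^ d) x1 = x'" .
    have "x1 \<noteq> x'" using inj_onD[OF cyc_orbit(2)[OF cyc' x'], of d 0] d unfolding x1_def by auto
    then have "x < (p ^^ d) x \<longleftrightarrow> x1 < (p' ^^ d) x1" using False bk unfolding x1_def by auto
    then show ?thesis using inj_core[OF cyc v cyc' v' x x1 w1] uniq by blast
  qed
qed



lemma realize:
  assumes n0: "0 < n" and lw: "length w = n" and sw: "set w \<subseteq> {0..<3}"
    and H1: "\<And>i j. i < n \<Longrightarrow> j < n \<Longrightarrow> i \<noteq> j \<Longrightarrow> rotate i w = rotate j w \<Longrightarrow>
               odd (ones (take i w)) \<noteq> odd (ones (take j w))"
    and H2: "\<And>i j. i < n \<Longrightarrow> j < n \<Longrightarrow> i \<noteq> j \<Longrightarrow> rotate i w = rotate j w \<Longrightarrow> even (ones w)"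
  shows "\<exists>p a b. cyclic_perm n p \<and> valid n p a b \<and> necklace (itin p a b n 1) = necklace w"
proof -
  have "\<exists>p a b x. cyclic_perm n p \<and> valid n p a b \<and> x \<in> {1..n} \<and> itin p a b n x = w"
  proof (rule construct[OF n0 lw sw])
    fix i j assume "i < n" "j < n" "i \<noteq> j" "rotate i w = rotate j w"
    then show "odd (ones (take i w)) \<noteq> odd (ones (take j w))" by (rule H1)
  next
    fix i j assume "i < n" "j < n" "i \<noteq> j" "rotate i w = rotate j w"
    then show "even (ones w)" by (rule H2)
  qed
  then obtain p a b x where c: "cyclic_perm n p" "valid n p a b" "x \<in> {1..n}" "itin p a b n x = w"
    by blast
  have one: "1 \<in> {1..n}" using n0 by simp
  obtain k where k: "x = (p ^^ k) 1" using c(3) cyc_orbit(3)[OF c(1) one] by (metis imageE)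
  have "w = rotate k (itin p a b n 1)" using c(4) itin_rotate[OF c(1) one] k by simp
  then have "necklace w = necklace (itin p a b n 1)" by (simp add: necklace_rotate)
  then show ?thesis using c by metis
qed

lemma dbl_H:
  assumes pq: "primitive_word q" and oq: "odd (ones q)" and m: "0 < length q"
    and ij: "i < 2 * length q" "j < 2 * length q" "i \<noteq> j" and r: "rotate i (q @ q) = rotate j (q @ q)"
  shows "odd (ones (take i (q @ q))) \<noteq> odd (ones (take j (q @ q)))"
proof -
  let ?m = "length q"
  have "rotate i q @ rotate i q = rotate j q @ rotate j q" using r by (simp add: rotate_double)
  then have "rotate i q = rotate j q" by (simp add: append_eq_append_conv)
  then have "rotate (i mod ?m) q = rotate (j mod ?m) q" by (metis rotate_conv_mod)
  then have mm: "i mod ?m = j mod ?m" using prim_rot_distinct[OF pq] m by simp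
  have key: "\<And>i j. i < j \<Longrightarrow> j < 2 * ?m \<Longrightarrow> i mod ?m = j mod ?m \<Longrightarrow>
              odd (ones (take i (q @ q))) \<noteq> odd (ones (take j (q @ q)))"
  proof -
    fix i j assume a: "i < j" "j < 2 * ?m" "i mod ?m = j mod ?m"
    have im: "i < ?m"
    proof (rule ccontr)
      assume "\<not> i < ?m"
      then have "i mod ?m = i - ?m" "j mod ?m = j - ?m" using a m by (auto simp: le_mod_geq)
      then show False using a \<open>\<not> i < ?m\<close> by simp
    qed
    have jm: "?m \<le> j"
    proof (rule ccontr)
      assume "\<not> ?m \<le> j"
      then have "j mod ?m = j" by simp
      then show False using a im by simp
    qed
    then have "j mod ?m = j - ?m" using a m by (auto simp: le_mod_geq)
    then have jj: "j = i + ?m" using a im jm by simp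
    have "take i (q @ q) = take i q" using im by simp
    moreover have "take (i + ?m) (q @ q) = q @ take i q" by simp
    ultimately have o: "ones (take j (q @ q)) = ones q + ones (take i (q @ q))" using jj im by simp
    show "odd (ones (take i (q @ q))) \<noteq> odd (ones (take j (q @ q)))" unfolding o using oq by simp
  qed
  show ?thesis
  proof (cases "i < j")
    case True then show ?thesis using key[OF True ij(2) mm] by simp
  next
    case False then have "j < i" using ij by simp
    then show ?thesis using key[OF \<open>j < i\<close> ij(1) mm[symmetric]] by simp
  qed
qed

lemma finite_words: "finite (words k m)"
proof -
  have "words k m = {xs. set xs \<subseteq> {0..<k} \<and> length xs = m}" unfolding words_def by auto
  then show ?thesis using finite_lists_length_eq[of "{0..<k}" m] by simp
qed

lemma o_sigma_ones: "o_sigma [True, False, True] s = ones s"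
proof -
  have "T_minus [True, False, True] = {1}" unfolding T_minus_def by (auto simp: less_Suc_eq numeral_3_eq_3)
  then show ?thesis unfolding o_sigma_def ones_def by (simp add: length_filter_conv_card)
qed



definition Dbl :: "nat \<Rightarrow> nat list set set" where
  "Dbl n = {necklace (q @ q) | q. 2 * length q = n \<and> set q \<subseteq> {0..<3} \<and> primitive_word q \<and> odd (ones q)}"

lemma prim_not_double: "\<not> primitive_word (r @ r)"
proof -
  have "r @ r = concat (replicate 2 r)" by (simp add: numeral_2_eq_2)
  then show ?thesis unfolding primitive_word_def by (metis one_less_numeral_iff semiring_norm(76))
qed

lemma PN_Dbl_disjoint: "primitive_necklaces 3 n \<inter> Dbl n = {}"
proof (rule ccontr)
  assume "primitive_necklaces 3 n \<inter> Dbl n \<noteq> {}"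
  then obtain N where N: "N \<in> primitive_necklaces 3 n" "N \<in> Dbl n" by blast
  from N(1) obtain w where w: "primitive_word w" "N = necklace w" unfolding primitive_necklaces_def by auto
  from N(2) obtain q where q: "N = necklace (q @ q)" unfolding Dbl_def by auto
  have e: "necklace w = necklace (q @ q)" using w q by simp
  have "w \<in> necklace (q @ q)" using e necklace_self by metis
  then obtain i where "w = rotate i (q @ q)" unfolding necklace_def by auto
  then have "w = rotate i q @ rotate i q" by (simp add: rotate_double)
  then show False using w(1) prim_not_double by metis
qed

lemma finite_PN: "finite (primitive_necklaces k n)"
  unfolding primitive_necklaces_def using finite_words by auto

lemma card_Dbl: "card (Dbl n) = (if even n then L_sig 3 (n div 2) [True, False, True] else 0)"
proof (cases "even n")
  case False
  then have "Dbl n = {}" unfolding Dbl_def by auto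
  then show ?thesis using False by simp
next
  case True
  define m where "m = n div 2"
  have nm: "n = 2 * m" using True unfolding m_def by simp
  define LS where "LS = {N \<in> primitive_necklaces 3 m. \<forall>s\<in>N. odd (o_sigma [True, False, True] s)}"
  define G where "G = (\<lambda>N::nat list set. (\<lambda>s. s @ s) ` N)"
  have injd: "inj (\<lambda>s::nat list. s @ s)"
  proof (rule injI)
    fix x y :: "nat list" assume e: "x @ x = y @ y"
    then have "length x = length y" by (metis add_mult_distrib2 length_append mult_2 nat_mult_eq_cancel_disj
      zero_less_numeral mult_left_cancel zero_neq_numeral)
    then show "x = y" using e by (simp add: append_eq_append_conv)
  qed
  have Gn: "\<And>q. G (necklace q) = necklace (q @ q)"
    unfolding G_def necklace_def by (auto simp: rotate_double)
  have injG: "inj_on G LS" unfolding G_def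
    by (rule inj_onI) (simp add: inj_image_eq_iff[OF injd])
  have imgG: "G ` LS = Dbl n"
  proof
    show "G ` LS \<subseteq> Dbl n"
    proof
      fix M assume "M \<in> G ` LS"
      then obtain N where N: "N \<in> LS" "M = G N" by auto
      then obtain q where q: "N = necklace q" "q \<in> words 3 m" "primitive_word q"
        unfolding LS_def primitive_necklaces_def by auto
      have "odd (ones q)" using N(1) q(1) necklace_self unfolding LS_def by (metis (no_types, lifting) mem_Collect_eq o_sigma_ones)
      then show "M \<in> Dbl n" using N q Gn nm unfolding Dbl_def words_def by auto
    qed
    show "Dbl n \<subseteq> G ` LS"
    proof
      fix M assume "M \<in> Dbl n"
      then obtain q where q: "M = necklace (q @ q)" "2 * length q = n" "set q \<subseteq> {0..<3}"
        "primitive_word q" "odd (ones q)" unfolding Dbl_def by auto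
      have "q \<in> words 3 m" using q nm unfolding words_def by auto
      then have "necklace q \<in> primitive_necklaces 3 m" using q unfolding primitive_necklaces_def by auto
      moreover have "\<forall>s\<in>necklace q. odd (o_sigma [True, False, True] s)"
        using q unfolding necklace_def by (auto simp: o_sigma_ones)
      ultimately have "necklace q \<in> LS" unfolding LS_def by auto
      then show "M \<in> G ` LS" using Gn q by auto
    qed
  qed
  have "card (Dbl n) = card LS" using card_image[OF injG] imgG by simp
  then show ?thesis using True unfolding L_sig_def LS_def m_def by simp
qed



theorem theorem3p1:
  fixes n :: nat
  assumes "n \<ge> 3"
  shows "real (c3 n) = real (L_star 3 n [True, False, True]) / 4"
proof -
  have n0: "0 < n" and one: "1 \<in> {1..n}" using assms by auto
  define C where "C = {p. cyclic_perm n p \<and> (\<exists>a b. valid n p a b)}"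
  have c3: "c3 n = card C"
    unfolding c3_def cyc_class_count_def C_def using class_iff cyc_perm by metis
  define V where "V = (\<lambda>p. {(a, b). valid n p a b})"
  define Pairs where "Pairs = Sigma C V"
  have finC: "finite C"
    by (rule finite_subset[OF _ finite_permutations[of "{1..n}"]]) (auto simp: C_def cyclic_perm_def)
  have finV: "\<And>p. finite (V p)"
    by (rule finite_subset[of _ "{0..n} \<times> {0..n}"]) (auto simp: V_def valid_def)
  have cardP: "card Pairs = card C * 4"
  proof -
    have "card Pairs = (\<Sum>p\<in>C. card (V p))" unfolding Pairs_def using finC finV by (simp add: card_SigmaI)
    also have "\<dots> = (\<Sum>p\<in>C. 4)"
    proof (rule sum.cong)
      fix p assume "p \<in> C"
      then obtain a b where "cyclic_perm n p" "valid n p a b" unfolding C_def by auto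
      then show "card (V p) = 4" unfolding V_def using four_segs assms by simp
    qed simp
    finally show ?thesis by simp
  qed
  define F where "F = (\<lambda>(p, (a::nat, b::nat)). necklace (itin p a b n 1))"
  define PN where "PN = primitive_necklaces 3 n"
  have inP: "\<And>p a b. (p, (a, b)) \<in> Pairs \<longleftrightarrow> cyclic_perm n p \<and> valid n p a b"
    unfolding Pairs_def C_def V_def by auto
  have injF: "inj_on F Pairs"
  proof (rule inj_onI)
    fix P1 P2 assume P: "P1 \<in> Pairs" "P2 \<in> Pairs" "F P1 = F P2"
    obtain p a b where P1: "P1 = (p, (a, b))" by (metis prod.exhaust)
    obtain p' a' b' where P2: "P2 = (p', (a', b'))" by (metis prod.exhaust)
    have c: "cyclic_perm n p" "valid n p a b" "cyclic_perm n p'" "valid n p' a' b'" using P P1 P2 inP by auto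
    have "necklace (itin p a b n 1) = necklace (itin p' a' b' n 1)" using P(3) P1 P2 F_def by simp
    then have "itin p' a' b' n 1 \<in> necklace (itin p a b n 1)" using necklace_self by metis
    then obtain i where "itin p' a' b' n 1 = rotate i (itin p a b n 1)" unfolding necklace_def by auto
    then have e: "itin p a b n ((p ^^ i) 1) = itin p' a' b' n 1" using itin_rotate[OF c(1) one] by simp
    have "(p ^^ i) 1 \<in> {1..n}" using funpow_in[OF cyc_perm[OF c(1)] one] .
    from inj_pairs[OF c(1,2,3,4) this one e] show "P1 = P2" using P1 P2 by simp
  qed
  have imgF: "F ` Pairs = PN \<union> Dbl n"
  proof
    show "F ` Pairs \<subseteq> PN \<union> Dbl n"
    proof
      fix N assume "N \<in> F ` Pairs"
      then obtain p a b where pab: "(p, (a, b)) \<in> Pairs" "N = F (p, (a, b))" by auto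
      then have c: "cyclic_perm n p" "valid n p a b" using inP by auto
      let ?w = "itin p a b n 1"
      have ww: "?w \<in> words 3 n" unfolding words_def using itin_letters by auto
      have N: "N = necklace ?w" using pab F_def by simp
      show "N \<in> PN \<union> Dbl n"
      proof (cases "primitive_word ?w")
        case True then show ?thesis unfolding N PN_def primitive_necklaces_def using ww by auto
      next
        case False
        then obtain q where q: "?w = q @ q" "primitive_word q" "odd (ones q)" "2 * length q = n"
          using struct_nonprim[OF c one] by blast
        have "set q \<subseteq> {0..<3}" using itin_letters[of p a b n 1] q(1) by auto
        then show ?thesis unfolding N Dbl_def using q by auto
      qed
    qed
    show "PN \<union> Dbl n \<subseteq> F ` Pairs"
    proof
      fix N assume N: "N \<in> PN \<union> Dbl n"
      have "\<exists>w. N = necklace w \<and> length w = n \<and> set w \<subseteq> {0..<3} \<and>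
        (\<forall>i j. i < n \<longrightarrow> j < n \<longrightarrow> i \<noteq> j \<longrightarrow> rotate i w = rotate j w \<longrightarrow>
               odd (ones (take i w)) \<noteq> odd (ones (take j w)) \<and> even (ones w))"
      proof (cases "N \<in> PN")
        case True
        then obtain w where w: "N = necklace w" "w \<in> words 3 n" "primitive_word w"
          unfolding PN_def primitive_necklaces_def by auto
        have "\<And>i j. i < n \<Longrightarrow> j < n \<Longrightarrow> i \<noteq> j \<Longrightarrow> rotate i w \<noteq> rotate j w"
          using prim_rot_distinct[OF w(3)] w(2) unfolding words_def by auto
        then show ?thesis using w unfolding words_def by blast
      next
        case False
        then have "N \<in> Dbl n" using N by simp
        then obtain q where q: "N = necklace (q @ q)" "2 * length q = n" "set q \<subseteq> {0..<3}"
          "primitive_word q" "odd (ones q)" unfolding Dbl_def by auto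
        have m: "0 < length q" using q(2) assms by auto
        have "\<forall>i j. i < n \<longrightarrow> j < n \<longrightarrow> i \<noteq> j \<longrightarrow> rotate i (q @ q) = rotate j (q @ q) \<longrightarrow>
               odd (ones (take i (q @ q))) \<noteq> odd (ones (take j (q @ q))) \<and> even (ones (q @ q))"
          using dbl_H[OF q(4,5) m] q(2) by auto
        then show ?thesis using q by (intro exI[of _ "q @ q"]) auto
      qed
      then obtain w where w: "N = necklace w" "length w = n" "set w \<subseteq> {0..<3}"
        "\<And>i j. i < n \<Longrightarrow> j < n \<Longrightarrow> i \<noteq> j \<Longrightarrow> rotate i w = rotate j w \<Longrightarrow>
               odd (ones (take i w)) \<noteq> odd (ones (take j w))"
        "\<And>i j. i < n \<Longrightarrow> j < n \<Longrightarrow> i \<noteq> j \<Longrightarrow> rotate i w = rotate j w \<Longrightarrow> even (ones w)"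
        by blast
      have "\<exists>p a b. cyclic_perm n p \<and> valid n p a b \<and> necklace (itin p a b n 1) = necklace w"
      proof (rule realize[OF n0 w(2,3)])
        fix i j assume "i < n" "j < n" "i \<noteq> j" "rotate i w = rotate j w"
        then show "odd (ones (take i w)) \<noteq> odd (ones (take j w))" by (rule w(4))
      next
        fix i j assume "i < n" "j < n" "i \<noteq> j" "rotate i w = rotate j w"
        then show "even (ones w)" by (rule w(5))
      qed
      then obtain p a b where pab: "cyclic_perm n p" "valid n p a b" "necklace (itin p a b n 1) = necklace w"
        by blast
      then have "(p, (a, b)) \<in> Pairs" using inP by auto
      moreover have "F (p, (a, b)) = N" using pab w(1) F_def by simp
      ultimately show "N \<in> F ` Pairs" by force
    qed
  qed
  have "card Pairs = card (PN \<union> Dbl n)" using card_image[OF injF] imgF by simp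
  also have "\<dots> = card PN + card (Dbl n)"
  proof (rule card_Un_disjoint)
    show "finite PN" unfolding PN_def by (rule finite_PN)
    have sub: "Dbl n \<subseteq> necklace ` {w. set w \<subseteq> {0..<3} \<and> length w = n}"
      unfolding Dbl_def by auto
    have "finite (necklace ` {w. set w \<subseteq> {0..<3::nat} \<and> length w = n})"
      by (intro finite_imageI finite_lists_length_eq) simp
    then show "finite (Dbl n)" by (rule finite_subset[OF sub])
    show "PN \<inter> Dbl n = {}" unfolding PN_def by (rule PN_Dbl_disjoint)
  qed
  also have "\<dots> = L_star 3 n [True, False, True]"
    unfolding L_star_def L_def PN_def card_Dbl by simp
  finally have "card C * 4 = L_star 3 n [True, False, True]" using cardP by simp
  then show ?thesis using c3 by simp
qed


end
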